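(* Let $p\in(0,1/2)$ be a constant. There is an integer $M_p$ depending only on $p$ such that for every integer $n'>M_p$ and every integer $r\ge 0$, the probability that the edge set of $G_{n',p}$ can be partitioned into at most $r$ pairwise edge-disjoint nonempty non-star bicliques is at most $$2(1-p)^{\binom{n'}{2}}\left[2\binom{n'}{2}\left(1+\left(\frac{p}{1-p}\right)^2\right)^{n'}\right]^r.$$ If $p<0.01$, the same bound holds for all $n'\ge 4$.
   Context: $G_{n',p}$ is the random graph on $n'$ vertices with each pair an edge independently with probability $p$. A non-star biclique is a complete bipartite subgraph $K_{a,b}$ with both parts of size $a,b\ge 2$. *)

theory Defs
  imports Complex_Main
begin

definition all_pairs :: "nat \<Rightarrow> nat set set" where
  "all_pairs n = {e. \<exists>a b. a < n \<and> b < n \<and> a \<noteq> b \<and> e = {a, b}}"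

definition biclique_edges :: "nat set \<Rightarrow> nat set \<Rightarrow> nat set set" where
  "biclique_edges A B = {{a, b} | a b. a \<in> A \<and> b \<in> B}"

definition nonstar_biclique :: "nat \<Rightarrow> nat set set \<Rightarrow> bool" where
  "nonstar_biclique n F \<longleftrightarrow>
     (\<exists>A B. A \<subseteq> {..<n} \<and> B \<subseteq> {..<n} \<and> A \<inter> B = {} \<and>
            card A \<ge> 2 \<and> card B \<ge> 2 \<and> F = biclique_edges A B)"

definition biclique_partitionable :: "nat \<Rightarrow> nat \<Rightarrow> nat set set \<Rightarrow> bool" where
  "biclique_partitionable n r E \<longleftrightarrow>
     (\<exists>Fs :: nat set set list. length Fs \<le> r \<and>
        (\<forall>F \<in> set Fs. nonstar_biclique n F \<and> F \<noteq> {}) \<and>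
        (\<forall>i < length Fs. \<forall>j < length Fs. i \<noteq> j \<longrightarrow> Fs ! i \<inter> Fs ! j = {}) \<and>
        \<Union>(set Fs) = E)"

definition gnp_prob :: "nat \<Rightarrow> real \<Rightarrow> (nat set set \<Rightarrow> bool) \<Rightarrow> real" where
  "gnp_prob n p P =
     (\<Sum>E \<in> {E. E \<subseteq> all_pairs n \<and> P E}.
        p ^ card E * (1 - p) ^ (card (all_pairs n) - card E))"

definition biclique_bound :: "nat \<Rightarrow> real \<Rightarrow> nat \<Rightarrow> real" where
  "biclique_bound n p r =
     2 * (1 - p) ^ (n choose 2) *
     (2 * real (n choose 2) * (1 + (p / (1 - p))^2) ^ n) ^ r"

end

theory Submission
  imports Defs
begin


lemma sum_Pow_card:
  fixes f :: "nat \<Rightarrow> real"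
  assumes "finite V"
  shows "(\<Sum>A\<in>Pow V. f (card A)) = (\<Sum>k\<le>card V. real (card V choose k) * f k)"
proof -
  have "(\<Sum>A\<in>Pow V. f (card A)) = (\<Sum>k\<in>{..card V}. \<Sum>A\<in>{A\<in>Pow V. card A = k}. f (card A))"
    by (rule sum.group[symmetric]) (use assms card_mono in \<open>auto\<close>)
  also have "\<dots> = (\<Sum>k\<le>card V. real (card V choose k) * f k)"
  proof (rule sum.cong[OF refl])
    fix k assume "k \<in> {..card V}"
    have "{A\<in>Pow V. card A = k} = {B. B \<subseteq> V \<and> card B = k}" by auto
    then have c: "card {A\<in>Pow V. card A = k} = card V choose k" using n_subsets[OF assms] by simp
    have "(\<Sum>A\<in>{A\<in>Pow V. card A = k}. f (card A)) = (\<Sum>A\<in>{A\<in>Pow V. card A = k}. f k)"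
      by (rule sum.cong) auto
    also have "\<dots> = real (card V choose k) * f k" using c by simp
    finally show "(\<Sum>A\<in>{A\<in>Pow V. card A = k}. f (card A)) = real (card V choose k) * f k" .
  qed
  finally show ?thesis .
qed

lemma sum_Pow_pow:
  fixes y :: real
  assumes "finite V"
  shows "(\<Sum>A\<in>Pow V. y ^ card A) = (1 + y) ^ card V"
  using sum_Pow_card[OF assms, of "\<lambda>k. y ^ k"] binomial_ring[of y 1 "card V"]
  by (simp add: add.commute)

lemma sum_Pow_card2:
  assumes "finite V"
  shows "(\<Sum>A\<in>Pow V. (if card A = 2 then (1::real) else 0)) = real (card V choose 2)"
proof -
  have "(\<Sum>A\<in>Pow V. (if card A = 2 then (1::real) else 0)) = real (card {A\<in>Pow V. card A = 2})"
    by (simp add: sum.If_cases[OF finite_Pow_iff[THEN iffD2, OF assms]] Int_def)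
  also have "{A\<in>Pow V. card A = 2} = {B. B \<subseteq> V \<and> card B = 2}" by auto
  finally show ?thesis using n_subsets[OF assms] by simp
qed

lemma tail_bound:
  fixes y :: real
  assumes "y \<ge> 0"
  shows "(\<Sum>k\<le>n. real (n choose k) * (if 3 \<le> k then y ^ (k - 3) else 0)) \<le> real (n choose 3) * (1 + y) ^ n"
proof -
  have "(\<Sum>k\<le>n. real (n choose k) * (if 3 \<le> k then y ^ (k - 3) else 0))
      \<le> (\<Sum>k\<le>n. (if 3 \<le> k then real (n choose 3) * (real (n choose (k - 3)) * y ^ (k - 3)) else 0))"
  proof (rule sum_mono)
    fix k assume "k \<in> {..n}"
    show "real (n choose k) * (if 3 \<le> k then y ^ (k - 3) else 0)
       \<le> (if 3 \<le> k then real (n choose 3) * (real (n choose (k - 3)) * y ^ (k - 3)) else 0)"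
    proof (cases "3 \<le> k \<and> k \<le> n")
      case True
      have "(n choose k) * (k choose 3) = (n choose 3) * ((n - 3) choose (k - 3))"
        using choose_mult[of 3 k n] True by simp
      moreover have "(k choose 3) \<ge> 1" using True by (simp add: Suc_leI)
      moreover have "((n - 3) choose (k - 3)) \<le> (n choose (k - 3))" by (rule binomial_right_mono) simp
      ultimately have "(n choose k) \<le> (n choose 3) * (n choose (k - 3))"
        by (metis dual_order.trans mult_le_cancel1 mult_le_mono2 nat_mult_1_right)
      hence "real (n choose k) \<le> real (n choose 3) * real (n choose (k - 3))"
        by (metis of_nat_le_iff of_nat_mult)
      then show ?thesis using True assms by (simp add: mult_right_mono mult.assoc[symmetric])
    next
      case False
      then show ?thesis using \<open>k \<in> {..n}\<close> by auto
    qed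
  qed
  also have "\<dots> = real (n choose 3) * (\<Sum>k\<le>n. (if 3 \<le> k then real (n choose (k - 3)) * y ^ (k - 3) else 0))"
    by (simp add: sum_distrib_left if_distrib cong: if_cong)
  also have "(\<Sum>k\<le>n. (if 3 \<le> k then real (n choose (k - 3)) * y ^ (k - 3) else 0))
       \<le> (\<Sum>j\<le>n. real (n choose j) * y ^ j)"
  proof -
    let ?g = "\<lambda>k. (if 3 \<le> k then real (n choose (k - 3)) * y ^ (k - 3) else 0)"
    have "(\<Sum>k\<le>n. ?g k) \<le> (\<Sum>k\<le>n+3. ?g k)"
      by (rule sum_mono2) (simp_all add: assms)
    also have "\<dots> = (\<Sum>k\<in>{3..n+3}. ?g k)"
      by (rule sum.mono_neutral_right) auto
    also have "(\<Sum>k\<in>{3..n+3}. ?g k) = (\<Sum>j\<in>{0..n}. ?g (j + 3))"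
      using sum.shift_bounds_cl_nat_ivl[of ?g 0 3 n] by simp
    also have "\<dots> = (\<Sum>j\<le>n. real (n choose j) * y ^ j)" by (simp add: atMost_atLeast0)
    finally show ?thesis by simp
  qed
  hence "real (n choose 3) * (\<Sum>k\<le>n. (if 3 \<le> k then real (n choose (k - 3)) * y ^ (k - 3) else 0))
       \<le> real (n choose 3) * (\<Sum>j\<le>n. real (n choose j) * y ^ j)"
    by (rule mult_left_mono) simp
  also have "(\<Sum>j\<le>n. real (n choose j) * y ^ j) = (1 + y) ^ n"
    using binomial_ring[of y 1 n] by (simp add: add.commute)
  finally show ?thesis .
qed


lemma card_Union_list:
  assumes "\<forall>F\<in>set Fs. finite F"
    and "\<forall>i<length Fs. \<forall>j<length Fs. i \<noteq> j \<longrightarrow> Fs ! i \<inter> Fs ! j = {}"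
  shows "card (\<Union>(set Fs)) = sum_list (map card Fs)"
  using assms
proof (induction Fs)
  case Nil
  then show ?case by simp
next
  case (Cons F Gs)
  have IH: "card (\<Union>(set Gs)) = sum_list (map card Gs)"
  proof (rule Cons.IH)
    show "\<forall>F\<in>set Gs. finite F" using Cons.prems by simp
    show "\<forall>i<length Gs. \<forall>j<length Gs. i \<noteq> j \<longrightarrow> Gs ! i \<inter> Gs ! j = {}"
    proof (intro allI impI)
      fix i j assume "i < length Gs" "j < length Gs" "i \<noteq> j"
      then show "Gs ! i \<inter> Gs ! j = {}"
        using Cons.prems(2)[rule_format, of "Suc i" "Suc j"] by simp
    qed
  qed
  have disj: "F \<inter> \<Union>(set Gs) = {}"
  proof -
    { fix G assume "G \<in> set Gs"
      then obtain j where "j < length Gs" "G = Gs ! j" by (metis in_set_conv_nth)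
      then have "F \<inter> G = {}" using Cons.prems(2)[rule_format, of 0 "Suc j"] by simp }
    then show ?thesis by blast
  qed
  have "card (\<Union>(set (F # Gs))) = card (F \<union> \<Union>(set Gs))" by simp
  also have "\<dots> = card F + card (\<Union>(set Gs))"
    by (rule card_Un_disjoint) (use Cons.prems disj in auto)
  finally show ?case using IH by simp
qed

lemma prod_list_nonneg':
  fixes f :: "'a \<Rightarrow> real"
  shows "(\<And>y. 0 \<le> f y) \<Longrightarrow> 0 \<le> prod_list (map f xs)"
  by (induction xs) auto

lemma pow_sum_list:
  fixes x :: real
  shows "x ^ sum_list (map card Fs) = prod_list (map (\<lambda>F. x ^ card F) Fs)"
  by (induction Fs) (simp_all add: power_add)

lemma sum_lists_eq:
  fixes f :: "'a \<Rightarrow> real"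
  assumes "finite A"
  shows "(\<Sum>xs\<in>{xs. set xs \<subseteq> A \<and> length xs = k}. prod_list (map f xs)) = (sum f A) ^ k"
proof (induction k)
  case 0
  have "{xs. set xs \<subseteq> A \<and> length xs = 0} = {[]}" by auto
  then show ?case by simp
next
  case (Suc k)
  let ?L = "\<lambda>k. {xs. set xs \<subseteq> A \<and> length xs = k}"
  have eq: "?L (Suc k) = (\<lambda>(a, xs). a # xs) ` (A \<times> ?L k)"
  proof
    show "?L (Suc k) \<subseteq> (\<lambda>(a, xs). a # xs) ` (A \<times> ?L k)"
    proof
      fix xs assume "xs \<in> ?L (Suc k)"
      then obtain a ys where "xs = a # ys" "a \<in> A" "ys \<in> ?L k"
        by (cases xs) auto
      then show "xs \<in> (\<lambda>(a, xs). a # xs) ` (A \<times> ?L k)" by force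
    qed
  qed auto
  have inj: "inj_on (\<lambda>(a, xs). a # xs) (A \<times> ?L k)" by (auto simp: inj_on_def)
  have "(\<Sum>xs\<in>?L (Suc k). prod_list (map f xs)) = (\<Sum>(a, xs)\<in>A \<times> ?L k. f a * prod_list (map f xs))"
    unfolding eq by (subst sum.reindex[OF inj]) (simp add: case_prod_unfold)
  also have "\<dots> = (\<Sum>a\<in>A. \<Sum>xs\<in>?L k. f a * prod_list (map f xs))"
    by (rule sum.cartesian_product[symmetric])
  also have "\<dots> = sum f A * (\<Sum>xs\<in>?L k. prod_list (map f xs))"
    by (simp add: sum_product)
  finally show ?case using Suc.IH by simp
qed

lemma sum_lists_le:
  fixes f :: "'a \<Rightarrow> real"
  assumes "finite A"
  shows "(\<Sum>xs\<in>{xs. set xs \<subseteq> A \<and> length xs \<le> r}. prod_list (map f xs)) = (\<Sum>k\<le>r. (sum f A) ^ k)"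
proof (induction r)
  case 0
  have "{xs. set xs \<subseteq> A \<and> length xs \<le> 0} = {[]}" by auto
  then show ?case by simp
next
  case (Suc r)
  have eq: "{xs. set xs \<subseteq> A \<and> length xs \<le> Suc r} =
     {xs. set xs \<subseteq> A \<and> length xs \<le> r} \<union> {xs. set xs \<subseteq> A \<and> length xs = Suc r}" by auto
  have "(\<Sum>xs\<in>{xs. set xs \<subseteq> A \<and> length xs \<le> Suc r}. prod_list (map f xs)) =
     (\<Sum>xs\<in>{xs. set xs \<subseteq> A \<and> length xs \<le> r}. prod_list (map f xs)) +
     (\<Sum>xs\<in>{xs. set xs \<subseteq> A \<and> length xs = Suc r}. prod_list (map f xs))"
    unfolding eq
    by (rule sum.union_disjoint) (auto intro: finite_lists_length_le finite_lists_length_eq assms)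
  then show ?case using Suc.IH sum_lists_eq[OF assms, of f "Suc r"] by simp
qed

lemma geom_le:
  fixes S T :: real
  assumes "0 \<le> S" "S \<le> T" "2 \<le> T"
  shows "(\<Sum>k\<le>r. S ^ k) \<le> 2 * T ^ r"
proof (induction r)
  case 0 then show ?case by simp
next
  case (Suc r)
  have "(\<Sum>k\<le>Suc r. S ^ k) = (\<Sum>k\<le>r. S ^ k) + S ^ Suc r" by simp
  also have "\<dots> \<le> 2 * T ^ r + T ^ Suc r"
    using Suc.IH power_mono[OF assms(2) assms(1), of "Suc r"] by linarith
  also have "\<dots> \<le> 2 * T ^ Suc r"
  proof -
    have "2 * T ^ r \<le> T * T ^ r" using assms(3) by (intro mult_right_mono) auto
    then show ?thesis by simp
  qed
  finally show ?case .
qed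


lemma all_pairs_eq: "all_pairs n = {e. e \<subseteq> {..<n} \<and> card e = 2}"
  unfolding all_pairs_def by (auto simp: card_2_iff)

lemma card_all_pairs: "card (all_pairs n) = n choose 2"
  unfolding all_pairs_eq using n_subsets[of "{..<n}" 2] by simp

lemma finite_all_pairs: "finite (all_pairs n)"
  unfolding all_pairs_eq by (rule finite_subset[of _ "Pow {..<n}"]) auto

lemma be_sym: "biclique_edges A B = biclique_edges B A"
  unfolding biclique_edges_def by (auto simp: insert_commute)

lemma be_image: "biclique_edges A B = (\<lambda>(a,b). {a,b}) ` (A \<times> B)"
  unfolding biclique_edges_def by auto

lemma card_be:
  assumes "A \<inter> B = {}" "finite A" "finite B"
  shows "card (biclique_edges A B) = card A * card B"
proof -
  have "inj_on (\<lambda>(a,b). {a,b}) (A \<times> B)"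
    using assms(1) by (auto simp: inj_on_def doubleton_eq_iff)
  then show ?thesis unfolding be_image by (simp add: card_image card_cartesian_product)
qed

lemma be_sub: "A \<subseteq> {..<n} \<Longrightarrow> B \<subseteq> {..<n} \<Longrightarrow> A \<inter> B = {} \<Longrightarrow> biclique_edges A B \<subseteq> all_pairs n"
  unfolding biclique_edges_def all_pairs_def by blast

definition NB :: "nat \<Rightarrow> nat set set set" where
  "NB n = {F. nonstar_biclique n F}"

definition DD :: "nat \<Rightarrow> (nat set \<times> nat set) set" where
  "DD n = {(A,B). A \<in> Pow {..<n} \<and> B \<in> Pow {..<n} \<and> A \<inter> B = {} \<and> 2 \<le> card A \<and> card A \<le> card B}"

lemma finite_DD: "finite (DD n)"
  by (rule finite_subset[of _ "Pow {..<n} \<times> Pow {..<n}"]) (auto simp: DD_def)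

lemma NB_sub: "NB n \<subseteq> (\<lambda>(A,B). biclique_edges A B) ` DD n"
proof
  fix F assume "F \<in> NB n"
  then obtain A B where AB: "A \<subseteq> {..<n}" "B \<subseteq> {..<n}" "A \<inter> B = {}" "card A \<ge> 2" "card B \<ge> 2"
    "F = biclique_edges A B" unfolding NB_def nonstar_biclique_def by blast
  show "F \<in> (\<lambda>(A,B). biclique_edges A B) ` DD n"
  proof (cases "card A \<le> card B")
    case True
    then have "(A,B) \<in> DD n" using AB by (auto simp: DD_def)
    then show ?thesis using AB by force
  next
    case False
    then have "(B,A) \<in> DD n" using AB by (auto simp: DD_def)
    moreover have "F = biclique_edges B A" using AB be_sym by simp
    ultimately show ?thesis by force
  qed
qed

lemma finite_NB: "finite (NB n)"
  using finite_surj[OF finite_DD NB_sub] .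

lemma NB_sub_pairs: "F \<in> NB n \<Longrightarrow> F \<subseteq> all_pairs n"
  unfolding NB_def nonstar_biclique_def using be_sub by blast

lemma S_bound:
  fixes x :: real
  assumes "0 \<le> x" "x \<le> 1"
  shows "(\<Sum>F\<in>NB n. x ^ card F) \<le>
    (\<Sum>A\<in>Pow {..<n}. \<Sum>B\<in>Pow {..<n}. (if 2 \<le> card A \<and> card A \<le> card B then x ^ (card A * card B) else 0))"
proof -
  let ?g = "\<lambda>F. x ^ card F"
  let ?h = "\<lambda>A B. (if 2 \<le> card A \<and> card A \<le> card B then x ^ (card A * card B) else 0)"
  let ?be = "\<lambda>(A,B). biclique_edges A B"
  have "(\<Sum>F\<in>NB n. ?g F) \<le> (\<Sum>F\<in>?be ` DD n. ?g F)"
    by (rule sum_mono2) (use NB_sub finite_DD assms in auto)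
  also have "\<dots> \<le> (\<Sum>AB\<in>DD n. (?g \<circ> ?be) AB)"
    by (rule sum_image_le) (use finite_DD assms in auto)
  also have "\<dots> = (\<Sum>AB\<in>DD n. case_prod ?h AB)"
  proof (rule sum.cong[OF refl])
    fix AB assume "AB \<in> DD n"
    then obtain A B where "AB = (A,B)" "A \<subseteq> {..<n}" "B \<subseteq> {..<n}" "A \<inter> B = {}" "2 \<le> card A" "card A \<le> card B"
      by (auto simp: DD_def)
    moreover have "finite A" "finite B" using calculation finite_subset by blast+
    ultimately show "(?g \<circ> ?be) AB = case_prod ?h AB" by (simp add: card_be)
  qed
  also have "\<dots> \<le> (\<Sum>AB\<in>Pow {..<n} \<times> Pow {..<n}. case_prod ?h AB)"
    by (rule sum_mono2) (auto simp: DD_def assms split: if_splits)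
  also have "\<dots> = (\<Sum>A\<in>Pow {..<n}. \<Sum>B\<in>Pow {..<n}. ?h A B)"
    by (rule sum.cartesian_product[symmetric])
  finally show ?thesis .
qed

lemma S_bound2:
  fixes x :: real and f1 g1 f2 g2 :: "nat \<Rightarrow> real"
  assumes "0 \<le> x" "x \<le> 1"
    and nn: "\<And>k. 0 \<le> f1 k" "\<And>k. 0 \<le> g1 k" "\<And>k. 0 \<le> f2 k" "\<And>k. 0 \<le> g2 k"
    and pt: "\<And>a b. 2 \<le> a \<Longrightarrow> a \<le> b \<Longrightarrow> x ^ (a * b) \<le> f1 a * g1 b + f2 a * g2 b"
  shows "(\<Sum>F\<in>NB n. x ^ card F) \<le>
     (\<Sum>A\<in>Pow {..<n}. f1 (card A)) * (\<Sum>B\<in>Pow {..<n}. g1 (card B)) +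
     (\<Sum>A\<in>Pow {..<n}. f2 (card A)) * (\<Sum>B\<in>Pow {..<n}. g2 (card B))"
proof -
  have "(\<Sum>F\<in>NB n. x ^ card F) \<le>
    (\<Sum>A\<in>Pow {..<n}. \<Sum>B\<in>Pow {..<n}. (if 2 \<le> card A \<and> card A \<le> card B then x ^ (card A * card B) else 0))"
    by (rule S_bound[OF assms(1,2)])
  also have "\<dots> \<le> (\<Sum>A\<in>Pow {..<n}. \<Sum>B\<in>Pow {..<n}. f1 (card A) * g1 (card B) + f2 (card A) * g2 (card B))"
    by (intro sum_mono) (auto intro: pt add_nonneg_nonneg mult_nonneg_nonneg nn)
  also have "\<dots> = (\<Sum>A\<in>Pow {..<n}. f1 (card A)) * (\<Sum>B\<in>Pow {..<n}. g1 (card B)) +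
     (\<Sum>A\<in>Pow {..<n}. f2 (card A)) * (\<Sum>B\<in>Pow {..<n}. g2 (card B))"
    by (simp add: sum.distrib sum_product)
  finally show ?thesis .
qed


lemma prob_bound:
  fixes p :: real
  assumes "0 < p" "p < 1"
  shows "gnp_prob n p (biclique_partitionable n r) \<le>
     (1 - p) ^ (n choose 2) * (\<Sum>k\<le>r. (\<Sum>F\<in>NB n. (p / (1 - p)) ^ card F) ^ k)"
proof -
  define q where "q = 1 - p"
  define x where "x = p / q"
  define N where "N = n choose 2"
  have q: "0 < q" using assms q_def by simp
  have x: "0 \<le> x" using assms q x_def by simp
  define Good where "Good = {E. E \<subseteq> all_pairs n \<and> biclique_partitionable n r E}"
  define L where "L = {Fs. set Fs \<subseteq> NB n \<and> length Fs \<le> r \<and>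
        (\<forall>i < length Fs. \<forall>j < length Fs. i \<noteq> j \<longrightarrow> Fs ! i \<inter> Fs ! j = {})}"
  define L' where "L' = {Fs. set Fs \<subseteq> NB n \<and> length Fs \<le> r}"
  define U where "U = (\<lambda>Fs::nat set set list. \<Union>(set Fs))"
  have finL': "finite L'" unfolding L'_def by (rule finite_lists_length_le[OF finite_NB])
  have LL': "L \<subseteq> L'" unfolding L_def L'_def by auto
  have finL: "finite L" using finite_subset[OF LL' finL'] .
  have GoodU: "Good \<subseteq> U ` L"
  proof
    fix E assume "E \<in> Good"
    then obtain Fs where Fs: "length Fs \<le> r" "\<forall>F \<in> set Fs. nonstar_biclique n F \<and> F \<noteq> {}"
      "\<forall>i < length Fs. \<forall>j < length Fs. i \<noteq> j \<longrightarrow> Fs ! i \<inter> Fs ! j = {}" "\<Union>(set Fs) = E"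
      unfolding Good_def biclique_partitionable_def by blast
    then have "Fs \<in> L" unfolding L_def NB_def by auto
    then show "E \<in> U ` L" using Fs(4) U_def by blast
  qed
  have "gnp_prob n p (biclique_partitionable n r) = (\<Sum>E\<in>Good. q ^ N * x ^ card E)"
    unfolding gnp_prob_def Good_def
  proof (rule sum.cong)
    fix E assume "E \<in> {E. E \<subseteq> all_pairs n \<and> biclique_partitionable n r E}"
    then have "card E \<le> N" using card_mono[OF finite_all_pairs] card_all_pairs N_def by fastforce
    then have e: "N = card E + (N - card E)" by simp
    have "q ^ N * x ^ card E = (x * q) ^ card E * q ^ (N - card E)"
      by (subst e) (simp add: power_add power_mult_distrib)
    also have "x * q = p" using q x_def by simp
    finally show "p ^ card E * (1 - p) ^ (card (all_pairs n) - card E) = q ^ N * x ^ card E"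
      by (simp add: card_all_pairs q_def N_def)
  qed simp
  also have "\<dots> = q ^ N * (\<Sum>E\<in>Good. x ^ card E)" by (simp add: sum_distrib_left)
  also have "(\<Sum>E\<in>Good. x ^ card E) \<le> (\<Sum>E\<in>U ` L. x ^ card E)"
    by (rule sum_mono2) (use GoodU finL x in auto)
  also have "\<dots> \<le> (\<Sum>Fs\<in>L. x ^ card (U Fs))"
    using sum_image_le[OF finL, of "\<lambda>E. x ^ card E" U] x by (simp add: o_def)
  also have "\<dots> = (\<Sum>Fs\<in>L. prod_list (map (\<lambda>F. x ^ card F) Fs))"
  proof (rule sum.cong[OF refl])
    fix Fs assume "Fs \<in> L"
    then have "card (U Fs) = sum_list (map card Fs)"
      unfolding U_def L_def
      by (intro card_Union_list) (auto dest!: NB_sub_pairs intro: finite_subset[OF _ finite_all_pairs])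
    then show "x ^ card (U Fs) = prod_list (map (\<lambda>F. x ^ card F) Fs)" by (simp add: pow_sum_list)
  qed
  also have "\<dots> \<le> (\<Sum>Fs\<in>L'. prod_list (map (\<lambda>F. x ^ card F) Fs))"
    by (rule sum_mono2[OF finL' LL']) (use x in \<open>auto intro!: prod_list_nonneg'\<close>)
  also have "\<dots> = (\<Sum>k\<le>r. (\<Sum>F\<in>NB n. x ^ card F) ^ k)"
    unfolding L'_def using sum_lists_le[OF finite_NB] by (simp add: conj_commute)
  finally have "gnp_prob n p (biclique_partitionable n r) \<le> q ^ N * (\<Sum>k\<le>r. (\<Sum>F\<in>NB n. x ^ card F) ^ k)"
    using q by (simp add: mult_left_mono)
  then show ?thesis unfolding q_def x_def N_def .
qed


lemma choose32: "real (n choose 3) * 3 = real (n choose 2) * (real n - 2)"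
proof (cases "n \<ge> 3")
  case True
  have "(n choose 3) * (3 choose 2) = (n choose 2) * ((n - 2) choose 1)"
    using choose_mult[of 2 3 n] True by simp
  moreover have "(3::nat) choose 2 = 3" by (simp add: numeral_eq_Suc)
  ultimately have "(n choose 3) * 3 = (n choose 2) * (n - 2)" by simp
  then have "real ((n choose 3) * 3) = real ((n choose 2) * (n - 2))" by simp
  then show ?thesis using True by (simp add: of_nat_diff)
next
  case False
  then have "n = 0 \<or> n = 1 \<or> n = 2" by auto
  then show ?thesis by (auto simp: binomial_eq_0)
qed

lemma choose43: "real (n choose 4) * 4 = real (n choose 3) * (real n - 3)"
proof (cases "n \<ge> 4")
  case True
  have "(n choose 4) * (4 choose 3) = (n choose 3) * ((n - 3) choose 1)"
    using choose_mult[of 3 4 n] True by simp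
  moreover have "(4::nat) choose 3 = 4" by (simp add: numeral_eq_Suc)
  ultimately have "(n choose 4) * 4 = (n choose 3) * (n - 3)" by simp
  then have "real ((n choose 4) * 4) = real ((n choose 3) * (n - 3))" by simp
  then show ?thesis using True by (simp add: of_nat_diff)
next
  case False
  then have "n = 0 \<or> n = 1 \<or> n = 2 \<or> n = 3" by auto
  then show ?thesis by (auto simp: numeral_eq_Suc)
qed

lemma binom_term_le:
  fixes t :: real
  assumes "0 \<le> t" "k \<le> n"
  shows "real (n choose k) * t ^ k \<le> (1 + t) ^ n"
proof -
  have "real (n choose k) * t ^ k = real (n choose k) * t ^ k * 1 ^ (n - k)" by simp
  also have "\<dots> \<le> (\<Sum>j\<le>n. real (n choose j) * t ^ j * 1 ^ (n - j))"
    by (rule member_le_sum[of k "{..n}" "\<lambda>j. real (n choose j) * t ^ j * 1 ^ (n - j)"])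
       (use assms in auto)
  also have "\<dots> = (t + 1) ^ n" by (rule binomial_ring[symmetric])
  finally show ?thesis by (simp add: add.commute)
qed

lemma aux_lin:
  fixes u t v w z :: real
  shows "0 \<le> u \<Longrightarrow> t \<le> u/10 \<Longrightarrow> v \<le> t \<Longrightarrow> w \<le> t \<Longrightarrow> z \<le> t \<Longrightarrow> 1 + u/2 + 2*t + v + w + z/2 \<le> 1 + u"
  by linarith

lemma poly_small:
  fixes x :: real
  assumes "0 \<le> x" "x \<le> 1/10"
  shows "(1 + x^3)^2 * (1 + x^2/2) \<le> 1 + x^2"
proof -
  have x1: "x \<le> 1" using assms by simp
  have a: "x^3 \<le> x^2 / 10" using mult_left_mono[OF assms(2), of "x^2"] assms by (simp add: power3_eq_cube power2_eq_square)
  have b: "x^5 \<le> x^3" "x^6 \<le> x^3" "x^8 \<le> x^3" using power_decreasing[OF _ assms(1) x1] by auto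
  have "(1 + x^3)^2 * (1 + x^2/2) = 1 + x^2/2 + 2 * x^3 + x^5 + x^6 + x^8/2"
    by (simp add: eval_nat_numeral algebra_simps)
  also have "\<dots> \<le> 1 + x^2" using a b assms
    by (rule_tac ?u="x^2" and t="x^3" and v="x^5" and w="x^6" and z="x^8" in aux_lin) auto
  finally show ?thesis .
qed

lemma S_part2:
  fixes x :: real
  assumes "0 \<le> x" "x \<le> 3/128" "n \<ge> 4"
  shows "(\<Sum>F\<in>NB n. x ^ card F) \<le> 2 * real (n choose 2) * (1 + x^2) ^ n"
proof -
  define y where "y = x^3"
  have y: "0 \<le> y" using assms y_def by simp
  have x1: "x \<le> 1" using assms by simp
  define f1 where "f1 = (\<lambda>a::nat. if a = 2 then (1::real) else 0)"
  define g1 where "g1 = (\<lambda>b::nat. (x^2)^b)"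
  define f2 where "f2 = (\<lambda>a::nat. if 3 \<le> a then y ^ (a - 3) else 0)"
  define g2 where "g2 = (\<lambda>b::nat. x^9 * (if 3 \<le> b then y ^ (b - 3) else 0))"
  have fin: "finite {..<n}" by simp
  have "(\<Sum>F\<in>NB n. x ^ card F) \<le>
     (\<Sum>A\<in>Pow {..<n}. f1 (card A)) * (\<Sum>B\<in>Pow {..<n}. g1 (card B)) +
     (\<Sum>A\<in>Pow {..<n}. f2 (card A)) * (\<Sum>B\<in>Pow {..<n}. g2 (card B))"
  proof (rule S_bound2[OF assms(1) x1])
    show "\<And>k. 0 \<le> f1 k" "\<And>k. 0 \<le> g1 k" "\<And>k. 0 \<le> f2 k" "\<And>k. 0 \<le> g2 k"
      using y assms by (auto simp: f1_def g1_def f2_def g2_def)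
    fix a b :: nat assume ab: "2 \<le> a" "a \<le> b"
    show "x ^ (a * b) \<le> f1 a * g1 b + f2 a * g2 b"
    proof (cases "a = 2")
      case True
      then show ?thesis using y by (simp add: f1_def g1_def f2_def g2_def power_mult)
    next
      case False
      then have a3: "3 \<le> a" "3 \<le> b" using ab by auto
      then obtain a' b' where ab': "a = a' + 3" "b = b' + 3" by (metis add.commute le_add_diff_inverse)
      have e: "9 + 3 * a' + 3 * b' \<le> a * b" unfolding ab' by (simp add: algebra_simps)
      have "x ^ (a * b) \<le> x ^ (9 + 3 * a' + 3 * b')"
        by (rule power_decreasing[OF e assms(1) x1])
      also have "\<dots> = x^9 * y ^ a' * y ^ b'" by (simp add: y_def power_add power_mult)
      finally show ?thesis using a3 ab' y assms by (simp add: f1_def g1_def f2_def g2_def mult_ac)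
    qed
  qed
  moreover have "(\<Sum>A\<in>Pow {..<n}. f1 (card A)) = real (n choose 2)"
    using sum_Pow_card2[OF fin] by (simp add: f1_def)
  moreover have "(\<Sum>B\<in>Pow {..<n}. g1 (card B)) = (1 + x^2) ^ n"
    using sum_Pow_pow[OF fin, of "x^2"] by (simp add: g1_def power_mult)
  moreover have F2: "(\<Sum>A\<in>Pow {..<n}. f2 (card A)) \<le> real (n choose 3) * (1 + y) ^ n"
    using sum_Pow_card[OF fin, of f2] tail_bound[OF y, of n] by (simp add: f2_def)
  moreover have "(\<Sum>B\<in>Pow {..<n}. g2 (card B)) = x^9 * (\<Sum>A\<in>Pow {..<n}. f2 (card A))"
    by (simp add: g2_def f2_def sum_distrib_left)
  moreover have G2: "x^9 * (\<Sum>A\<in>Pow {..<n}. f2 (card A)) \<le> x^9 * (real (n choose 3) * (1 + y) ^ n)"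
    using F2 assms by (intro mult_left_mono) simp_all
  moreover have "0 \<le> (\<Sum>A\<in>Pow {..<n}. f2 (card A))" by (auto intro!: sum_nonneg simp: f2_def y)
  moreover have "0 \<le> x^9 * (\<Sum>A\<in>Pow {..<n}. f2 (card A))" by (intro mult_nonneg_nonneg sum_nonneg) (auto simp: f2_def y assms)
  ultimately have S1: "(\<Sum>F\<in>NB n. x ^ card F) \<le> real (n choose 2) * (1 + x^2) ^ n +
      real (n choose 3) * (1 + y) ^ n * (x^9 * (real (n choose 3) * (1 + y) ^ n))"
    by (smt (verit) mult_mono)
  have key: "real (n choose 3) * (1 + y) ^ n * (x^9 * (real (n choose 3) * (1 + y) ^ n))
      \<le> real (n choose 2) * (1 + x^2) ^ n"
  proof -
    let ?C2 = "real (n choose 2)" and ?C3 = "real (n choose 3)" and ?C4 = "real (n choose 4)"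
    have n4: "real n \<ge> 4" using assms by simp
    have c: "16 * x * ?C3^2 \<le> ?C2 * ?C4"
    proof -
      have h1: "?C3 = ?C2 * (real n - 2) / 3" using choose32[of n] by simp
      have h2: "?C4 = ?C3 * (real n - 3) / 4" using choose43[of n] by simp
      have "16 * x * (real n - 2) / 3 \<le> (real n - 3) / 4"
      proof -
        have "64 * x * (real n - 2) \<le> 64 * (3/128) * (real n - 2)"
          using assms n4 by (intro mult_right_mono mult_left_mono) auto
        also have "\<dots> \<le> 3 * (real n - 3)" using n4 by simp
        finally show ?thesis by simp
      qed
      then have ineq: "?C2 * ?C3 * (16 * x * (real n - 2) / 3) \<le> ?C2 * ?C3 * ((real n - 3) / 4)"
        by (intro mult_left_mono) auto
      have e1: "?C2 * (real n - 2) = 3 * ?C3" using choose32[of n] by linarith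
      have e2: "?C3 * (real n - 3) = 4 * ?C4" using choose43[of n] by linarith
      have "?C2 * ?C3 * (16 * x * (real n - 2) / 3) = 16 * x * ?C3 * (?C2 * (real n - 2)) / 3"
        by (simp add: algebra_simps)
      also have "\<dots> = 16 * x * ?C3^2" unfolding e1 by (simp add: power2_eq_square)
      finally have l: "?C2 * ?C3 * (16 * x * (real n - 2) / 3) = 16 * x * ?C3^2" .
      have "?C2 * ?C3 * ((real n - 3) / 4) = ?C2 * (?C3 * (real n - 3)) / 4" by (simp add: algebra_simps)
      also have "\<dots> = ?C2 * ?C4" unfolding e2 by simp
      finally have r: "?C2 * ?C3 * ((real n - 3) / 4) = ?C2 * ?C4" .
      show ?thesis using ineq l r by linarith
    qed
    have t: "?C4 * (x^2/2)^4 \<le> (1 + x^2/2) ^ n"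
      by (rule binom_term_le) (use assms in auto)
    have pp: "((1 + y)^2) ^ n * (1 + x^2/2) ^ n \<le> (1 + x^2) ^ n"
      unfolding power_mult_distrib[symmetric]
      by (rule power_mono) (use poly_small[of x] assms y_def in auto)
    have "?C3 * (1 + y) ^ n * (x^9 * (?C3 * (1 + y) ^ n)) = (16 * x * ?C3^2) * (x^8/16) * ((1 + y)^2) ^ n"
    proof -
      have q1: "((1 + y)^2) ^ n = (1 + y)^n * (1 + y)^n" by (simp only: power2_eq_square power_mult_distrib)
      have q2: "x^9 = x * x^8" by (simp add: power_Suc[symmetric] del: power_Suc)
      show ?thesis unfolding q1 q2 by (simp add: power2_eq_square mult_ac power_mult_distrib)
    qed
    also have "\<dots> \<le> (?C2 * ?C4) * (x^8/16) * ((1 + y)^2) ^ n"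
      using c y by (intro mult_right_mono) auto
    also have "\<dots> = ?C2 * ((1 + y)^2) ^ n * (?C4 * (x^2/2)^4)"
    proof -
      have q3: "(x^2/2)^4 = x^8/16" by (simp add: power_divide power_mult[symmetric])
      show ?thesis unfolding q3 by (simp add: mult_ac)
    qed
    also have "\<dots> \<le> ?C2 * ((1 + y)^2) ^ n * (1 + x^2/2) ^ n"
      using t y by (intro mult_left_mono) auto
    also have "\<dots> \<le> ?C2 * (1 + x^2) ^ n"
      using pp by (simp add: mult.assoc mult_left_mono)
    finally show ?thesis .
  qed
  show ?thesis using S1 key by simp
qed


lemma aux_z: "a \<le> 1 \<Longrightarrow> 0 \<le> b \<Longrightarrow> (a - b) / 4 \<le> (1::real)" by (simp add: field_simps)

lemma xa_bound:
  fixes x z :: real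
  assumes "0 < x" "x < 1" "0 < z" "z \<le> 1" "x ^ K \<le> z"
  shows "x ^ (a * (a - 3)) \<le> (1/z) ^ (K + 3) * z ^ a"
proof (cases "a \<le> K + 3")
  case True
  have "x ^ (a * (a - 3)) \<le> 1" using assms by (simp add: power_le_one)
  also have "1 = (1/z) ^ a * z ^ a" using assms by (simp add: power_one_over)
  also have "\<dots> \<le> (1/z) ^ (K + 3) * z ^ a"
    using True assms by (intro mult_right_mono power_increasing) auto
  finally show ?thesis .
next
  case False
  then have aK: "K \<le> a - 3" by simp
  have "x ^ (a * (a - 3)) = (x ^ (a - 3)) ^ a" by (simp add: power_mult[symmetric] mult.commute)
  also have "\<dots> \<le> (x ^ K) ^ a"
    using assms aK by (intro power_mono power_decreasing) auto
  also have "\<dots> \<le> z ^ a" using assms by (intro power_mono) auto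
  also have "\<dots> \<le> (1/z) ^ (K + 3) * z ^ a"
  proof -
    have "1 \<le> (1/z) ^ (K + 3)" using assms by (simp add: one_le_power)
    moreover have "0 \<le> z ^ a" using assms by simp
    ultimately show ?thesis using mult_right_mono[of 1 "(1/z) ^ (K + 3)" "z ^ a"] by simp
  qed
  finally show ?thesis .
qed

lemma S_part1:
  fixes x :: real
  assumes "0 < x" "x < 1"
  shows "\<exists>M. \<forall>n > M. (\<Sum>F\<in>NB n. x ^ card F) \<le> 2 * real (n choose 2) * (1 + x^2) ^ n"
proof -
  define z where "z = (x^2 - x^3) / 4"
  have x32: "x^3 < x^2" using assms by (simp add: power_strict_decreasing)
  have z0: "0 < z" using x32 z_def by simp
  have "x^2 \<le> 1" using assms by (simp add: power_le_one)
  moreover have "0 \<le> x^3" using assms by simp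
  ultimately have z1: "z \<le> 1" unfolding z_def by (rule aux_z)
  obtain K where K: "x ^ K < z" using real_arch_pow_inv[OF z0 assms(2)] by blast
  define C0 where "C0 = (1/z) ^ (K + 3)"
  have C0: "1 \<le> C0" unfolding C0_def using z0 z1 by (simp add: one_le_power)
  define w where "w = (1 + z) * (1 + x^3)"
  define u where "u = 1 + x^2"
  have w0: "0 < w" using z0 assms w_def by (simp add: add_pos_pos)
  have wu: "w < u"
  proof -
    have "w = 1 + x^3 + z + z * x^3" by (simp add: w_def algebra_simps)
    also have "z * x^3 \<le> z" using z0 assms by (simp add: power_le_one)
    then have "1 + x^3 + z + z * x^3 \<le> 1 + x^3 + 2 * z" by simp
    also have "\<dots> < u" using x32 by (simp add: z_def u_def field_simps)
    finally show ?thesis by simp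
  qed
  have "1 < u / w" using wu w0 by simp
  then obtain M0 where M0: "C0 < (u / w) ^ M0" using real_arch_pow by blast
  show ?thesis
  proof (intro exI allI impI)
    fix n assume n: "n > M0 + 2"
    have fin: "finite {..<n}" by simp
    have x1: "x \<le> 1" using assms by simp
    define f1 where "f1 = (\<lambda>a::nat. if a = 2 then (1::real) else 0)"
    define g1 where "g1 = (\<lambda>b::nat. (x^2)^b)"
    define f2 where "f2 = (\<lambda>a::nat. if 3 \<le> a then C0 * z ^ a else 0)"
    define g2 where "g2 = (\<lambda>b::nat. (x^3)^b)"
    have "(\<Sum>F\<in>NB n. x ^ card F) \<le>
       (\<Sum>A\<in>Pow {..<n}. f1 (card A)) * (\<Sum>B\<in>Pow {..<n}. g1 (card B)) +
       (\<Sum>A\<in>Pow {..<n}. f2 (card A)) * (\<Sum>B\<in>Pow {..<n}. g2 (card B))"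
    proof (rule S_bound2)
      show "0 \<le> x" "x \<le> 1" using assms by auto
      show "\<And>k. 0 \<le> f1 k" "\<And>k. 0 \<le> g1 k" "\<And>k. 0 \<le> f2 k" "\<And>k. 0 \<le> g2 k"
        using z0 C0 assms by (auto simp: f1_def g1_def f2_def g2_def)
      fix a b :: nat assume ab: "2 \<le> a" "a \<le> b"
      show "x ^ (a * b) \<le> f1 a * g1 b + f2 a * g2 b"
      proof (cases "a = 2")
        case True
        then show ?thesis using z0 C0 by (simp add: f1_def g1_def f2_def g2_def power_mult)
      next
        case False
        then have a3: "3 \<le> a" using ab by auto
        then obtain a' where a': "a = a' + 3" by (metis add.commute le_add_diff_inverse)
        have e: "3 * b + a * (a - 3) \<le> a * b"
        proof -
          have "a' * (a' + 3) \<le> a' * b" using ab(2) a' by (intro mult_le_mono2) simp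
          then show ?thesis unfolding a' by (simp add: algebra_simps)
        qed
        have "x ^ (a * b) \<le> x ^ (3 * b + a * (a - 3))"
          by (rule power_decreasing[OF e]) (use assms in auto)
        also have "\<dots> = (x^3)^b * x ^ (a * (a - 3))" by (simp add: power_add power_mult)
        also have "\<dots> \<le> (x^3)^b * (C0 * z ^ a)"
          using xa_bound[OF assms z0 z1 less_imp_le[OF K], of a] assms
          by (intro mult_left_mono) (auto simp: C0_def)
        finally show ?thesis using a3 by (simp add: f1_def g1_def f2_def g2_def mult_ac)
      qed
    qed
    moreover have "(\<Sum>A\<in>Pow {..<n}. f1 (card A)) = real (n choose 2)"
      using sum_Pow_card2[OF fin] by (simp add: f1_def)
    moreover have "(\<Sum>B\<in>Pow {..<n}. g1 (card B)) = (1 + x^2) ^ n"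
      using sum_Pow_pow[OF fin, of "x^2"] by (simp add: g1_def power_mult)
    moreover have F2: "(\<Sum>A\<in>Pow {..<n}. f2 (card A)) \<le> C0 * (1 + z) ^ n"
    proof -
      have "(\<Sum>A\<in>Pow {..<n}. f2 (card A)) \<le> (\<Sum>A\<in>Pow {..<n}. C0 * z ^ card A)"
        by (rule sum_mono) (use z0 C0 in \<open>auto simp: f2_def\<close>)
      also have "\<dots> = C0 * (1 + z) ^ n" using sum_Pow_pow[OF fin, of z] by (simp add: sum_distrib_left[symmetric])
      finally show ?thesis .
    qed
    moreover have "(\<Sum>B\<in>Pow {..<n}. g2 (card B)) = (1 + x^3) ^ n"
      using sum_Pow_pow[OF fin, of "x^3"] by (simp add: g2_def)
    moreover have "0 \<le> (1 + x^3) ^ n" using assms by simp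
    ultimately have S1: "(\<Sum>F\<in>NB n. x ^ card F) \<le> real (n choose 2) * (1 + x^2) ^ n + C0 * (1 + z) ^ n * (1 + x^3) ^ n"
      by (smt (verit) mult_right_mono)
    have "C0 * (1 + z) ^ n * (1 + x^3) ^ n = C0 * w ^ n" by (simp add: w_def power_mult_distrib)
    also have "\<dots> \<le> (u / w) ^ n * w ^ n"
    proof -
      have "(u / w) ^ M0 \<le> (u / w) ^ n" using \<open>1 < u / w\<close> n by (intro power_increasing) auto
      then show ?thesis using M0 w0 by (intro mult_right_mono) auto
    qed
    also have "\<dots> = u ^ n" using w0 by (simp add: power_divide)
    also have "\<dots> \<le> real (n choose 2) * u ^ n"
    proof -
      have "1 \<le> n choose 2" using n by (simp add: Suc_leI)
      then have "1 \<le> real (n choose 2)" by simp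
      moreover have "0 \<le> u ^ n" using u_def by simp
      ultimately show ?thesis using mult_right_mono[of 1 "real (n choose 2)" "u ^ n"] by simp
    qed
    finally show "(\<Sum>F\<in>NB n. x ^ card F) \<le> 2 * real (n choose 2) * (1 + x^2) ^ n"
      using S1 u_def by simp
  qed
qed


lemma final_from_S:
  fixes p :: real
  assumes "0 < p" "p < 1" "2 \<le> n"
    and S: "(\<Sum>F\<in>NB n. (p / (1 - p)) ^ card F) \<le> 2 * real (n choose 2) * (1 + (p / (1 - p))^2) ^ n"
  shows "gnp_prob n p (biclique_partitionable n r) \<le> biclique_bound n p r"
proof -
  define S where "S = (\<Sum>F\<in>NB n. (p / (1 - p)) ^ card F)"
  define T where "T = 2 * real (n choose 2) * (1 + (p / (1 - p))^2) ^ n"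
  have S0: "0 \<le> S" unfolding S_def using assms by (intro sum_nonneg) auto
  have T2: "2 \<le> T"
  proof -
    have "1 \<le> n choose 2" using assms by (simp add: Suc_leI)
    then have "1 \<le> real (n choose 2)" by simp
    moreover have "1 \<le> (1 + (p / (1 - p))^2) ^ n" by (rule one_le_power) simp
    ultimately have "1 \<le> real (n choose 2) * (1 + (p / (1 - p))^2) ^ n"
      using mult_mono[of 1 "real (n choose 2)" 1 "(1 + (p / (1 - p))^2) ^ n"] by simp
    then show ?thesis unfolding T_def by simp
  qed
  have "gnp_prob n p (biclique_partitionable n r) \<le> (1 - p) ^ (n choose 2) * (\<Sum>k\<le>r. S ^ k)"
    using prob_bound[OF assms(1,2)] unfolding S_def .
  also have "\<dots> \<le> (1 - p) ^ (n choose 2) * (2 * T ^ r)"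
    using geom_le[OF S0 _ T2] S assms unfolding S_def T_def by (intro mult_left_mono) auto
  also have "\<dots> = biclique_bound n p r" unfolding biclique_bound_def T_def by simp
  finally show ?thesis .
qed

theorem mainTheorem6:
  fixes p :: real
  assumes "0 < p" and "p < 1/2"
  shows "(\<exists>M :: nat. \<forall>n > M. \<forall>r :: nat.
            gnp_prob n p (biclique_partitionable n r) \<le> biclique_bound n p r) \<and>
         (p < 0.01 \<longrightarrow> (\<forall>n \<ge> 4. \<forall>r :: nat.
            gnp_prob n p (biclique_partitionable n r) \<le> biclique_bound n p r))"
proof
  define x where "x = p / (1 - p)"
  have p1: "p < 1" using assms by simp
  have x0: "0 < x" using assms x_def by simp
  have x1: "x < 1" unfolding x_def using assms by (simp add: field_simps)
  show "\<exists>M :: nat. \<forall>n > M. \<forall>r :: nat.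
            gnp_prob n p (biclique_partitionable n r) \<le> biclique_bound n p r"
  proof -
    obtain M where M: "\<forall>n > M. (\<Sum>F\<in>NB n. x ^ card F) \<le> 2 * real (n choose 2) * (1 + x^2) ^ n"
      using S_part1[OF x0 x1] by blast
    show ?thesis
    proof (intro exI allI impI)
      fix n r :: nat assume n: "n > M + 2"
      show "gnp_prob n p (biclique_partitionable n r) \<le> biclique_bound n p r"
        by (rule final_from_S[OF assms(1) p1]) (use n M x_def in auto)
    qed
  qed
  show "p < 0.01 \<longrightarrow> (\<forall>n \<ge> 4. \<forall>r :: nat.
            gnp_prob n p (biclique_partitionable n r) \<le> biclique_bound n p r)"
  proof (intro impI allI)
    fix n r :: nat assume p01: "p < 0.01" and n: "4 \<le> n"
    have "x \<le> 3/128" unfolding x_def using p01 assms by (simp add: field_simps)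
    then have "(\<Sum>F\<in>NB n. x ^ card F) \<le> 2 * real (n choose 2) * (1 + x^2) ^ n"
      using S_part2[of x n] x0 n by simp
    then show "gnp_prob n p (biclique_partitionable n r) \<le> biclique_bound n p r"
      by (intro final_from_S[OF assms(1) p1]) (use n x_def in auto)
  qed
qed

end
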